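(* Let $S_1=\mathrm{diag}(1,-1,-1)$, $S_2=\mathrm{diag}(-1,1,-1)$, $S_3=\mathrm{diag}(-1,-1,1)$, and let $G$ be a finite group of $3\times 3$ unitary matrices containing $S_1,S_2,S_3$ and a matrix $T$. Let $c$ be one of the numbers $1/2$, $(\sqrt5+1)/4$, $(\sqrt5-1)/4$. Then: (i) for every $j\in\{1,2,3\}$, if $|T_{jj}|=c$ then $T_{jj}=c\,\xi$ for some root of unity $\xi$; (ii) for all $k\neq l$ in $\{1,2,3\}$, if $|T_{kl}T_{lk}|=\tfrac14$ then $T_{kl}T_{lk}=\xi'/4$ for some root of unity $\xi'$.
   Context: In the paper $T$ is an element of the residual charged-lepton symmetry group $G_\ell$, a subgroup of the finite flavour group $G$, and $G$ contains the Klein four-group $\{\mathbbm 1,S_1,S_2,S_3\}$. *)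

theory Defs
  imports "HOL-Analysis.Analysis"
begin

definition cadj :: "complex^3^3 \<Rightarrow> complex^3^3" where
  "cadj A = (\<chi> i j. cnj (A $ j $ i))"

definition unitary3 :: "complex^3^3 \<Rightarrow> bool" where
  "unitary3 A \<longleftrightarrow> A ** cadj A = mat 1 \<and> cadj A ** A = mat 1"

definition finite_matrix_group :: "(complex^3^3) set \<Rightarrow> bool" where
  "finite_matrix_group G \<longleftrightarrow> finite G \<and> mat 1 \<in> G \<and>
     (\<forall>A\<in>G. \<forall>B\<in>G. A ** B \<in> G) \<and>
     (\<forall>A\<in>G. invertible A \<and> matrix_inv A \<in> G)"

text \<open>S k = diagonal matrix with entry 1 at position k and -1 elsewhere.
  Indices 1,2,3 of the type 3 (where 3 = 0) are the three positions.\<close>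
definition Smat :: "3 \<Rightarrow> complex^3^3" where
  "Smat k = (\<chi> i j. if i = j then (if i = k then 1 else -1) else 0)"

definition root_of_unity :: "complex \<Rightarrow> bool" where
  "root_of_unity z \<longleftrightarrow> (\<exists>n::nat. n > 0 \<and> z ^ n = 1)"

end

theory Submission
  imports Defs "HOL-Computational_Algebra.Fundamental_Theorem_Algebra"
begin

abbreviation mp :: "int poly \<Rightarrow> complex poly" where "mp \<equiv> map_poly of_int"

lemma mp_add: "mp (p + q) = mp p + mp q"
  by (intro poly_eqI) (simp add: coeff_map_poly)
lemma mp_diff: "mp (p - q) = mp p - mp q"
  by (intro poly_eqI) (simp add: coeff_map_poly)
lemma mp_mult: "mp (p * q) = mp p * mp q"
  by (intro poly_eqI) (simp add: coeff_map_poly coeff_mult)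
lemma mp_1: "mp 1 = 1" by simp
lemma mp_power: "mp (p ^ n) = mp p ^ n"
  by (induction n) (simp_all add: mp_mult)
lemma mp_smult: "mp (smult a p) = smult (of_int a) (mp p)"
  by (simp add: map_poly_smult)
lemma mp_monom: "mp (monom a n) = monom (of_int a) n"
  by (simp add: map_poly_monom)
lemma mp_const: "mp [:a:] = [:of_int a:]"
  by (intro poly_eqI) (simp add: coeff_map_poly coeff_pCons split: nat.split)
lemma mp_pcompose: "mp (pcompose p q) = pcompose (mp p) (mp q)"
  by (induction p) (simp_all add: map_poly_pCons pcompose_pCons mp_add mp_mult)
lemma mp_eq0: "mp p = 0 \<longleftrightarrow> p = 0"
  by (simp add: map_poly_eq_0_iff)
lemma mp_cnj: "cnj (poly (mp p) z) = poly (mp p) (cnj z)"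
proof -
  have "map_poly cnj (mp p) = mp p"
    by (intro poly_eqI) (simp add: coeff_map_poly)
  then show ?thesis by (simp add: poly_cnj)
qed

definition zeta :: "nat \<Rightarrow> complex" where "zeta N = exp(2 * of_real pi * \<i> / of_nat N)"

lemma zeta_pow: "zeta N ^ j = exp(2 * of_real pi * \<i> * of_nat j / of_nat N)"
  unfolding zeta_def exp_of_nat_mult[symmetric] by (simp add: field_simps)

lemma zeta_pow_eq_1: "N \<ge> 1 \<Longrightarrow> zeta N ^ j = 1 \<longleftrightarrow> N dvd j"
  unfolding zeta_pow by (rule complex_root_unity_eq_1)

lemma zeta_N: "N \<ge> 1 \<Longrightarrow> zeta N ^ N = 1"
  by (simp add: zeta_pow_eq_1)

lemma zeta_root: assumes "N \<ge> 1" "z ^ N = 1" shows "\<exists>j<N. z = zeta N ^ j"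
  using complex_roots_unity[OF assms(1)] assms(2) by (auto simp: zeta_pow)

lemma norm_root: assumes "N \<ge> 1" "(z::complex) ^ N = 1" shows "norm z = 1"
proof -
  have "norm z ^ N = 1 ^ N" using assms by (metis norm_one norm_power power_one)
  then show ?thesis using assms(1) by (meson norm_ge_zero power_eq_imp_eq_base zero_le_one less_le_trans zero_less_one)
qed

lemma cnj_root: assumes "N \<ge> 1" "(z::complex) ^ N = 1" shows "cnj z = z ^ (N - 1)"
proof -
  have "z * cnj z = 1" using norm_root[OF assms]
    by (metis complex_norm_square mult.commute of_real_1 power_one)
  moreover have "z * z ^ (N - 1) = 1" using assms by (metis One_nat_def Suc_pred' less_eq_Suc_le power_Suc)
  ultimately have "cnj z = cnj z * (z * z ^ (N - 1))" by simp
  also have "\<dots> = (z * cnj z) * z ^ (N - 1)" by (simp only: mult.assoc mult.commute mult.left_commute)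
  finally show ?thesis using \<open>z * cnj z = 1\<close> by simp
qed

lemma root_pow: "(w::complex) ^ N = 1 \<Longrightarrow> (w ^ j) ^ N = 1"
proof -
  assume a: "w ^ N = 1"
  have "(w ^ j) ^ N = (w ^ N) ^ j" by (simp only: power_mult[symmetric] mult.commute)
  then show ?thesis using a by simp
qed

lemma geo_sum: assumes "N \<ge> 1"
  shows "(\<Sum>j<N. (zeta N ^ m) ^ j) = (if N dvd m then of_nat N else 0)"
proof (cases "N dvd m")
  case True
  then have "zeta N ^ m = 1" using assms by (simp add: zeta_pow_eq_1)
  then show ?thesis using True by simp
next
  case False
  then have "zeta N ^ m \<noteq> 1" using assms by (simp add: zeta_pow_eq_1)
  moreover have "(zeta N ^ m) ^ N = 1"
    by (rule root_pow[OF zeta_N[OF assms(1)]])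
  ultimately show ?thesis using False by (simp add: geometric_sum)
qed

definition fc :: "nat \<Rightarrow> int poly \<Rightarrow> nat \<Rightarrow> int" where
  "fc N s k = (\<Sum>i\<in>{i. i \<le> degree s \<and> i mod N = k}. coeff s i)"

lemma FI1: assumes "N \<ge> 1" "\<omega> ^ N = 1"
  shows "poly (mp s) \<omega> = (\<Sum>k<N. of_int (fc N s k) * \<omega> ^ k)"
proof -
  have deg: "degree (mp s) = degree s" by (simp add: degree_map_poly)
  have "poly (mp s) \<omega> = (\<Sum>i\<le>degree s. of_int (coeff s i) * \<omega> ^ i)"
    by (simp add: poly_altdef deg coeff_map_poly)
  also have "\<dots> = (\<Sum>i\<le>degree s. of_int (coeff s i) * \<omega> ^ (i mod N))"
  proof (intro sum.cong refl)
    fix i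
    have "\<omega> ^ i = \<omega> ^ (N * (i div N) + i mod N)" by (metis div_mult_mod_eq mult.commute)
    also have "\<dots> = (\<omega> ^ N) ^ (i div N) * \<omega> ^ (i mod N)" by (simp only: power_add power_mult)
    also have "\<dots> = \<omega> ^ (i mod N)" by (simp add: assms(2))
    finally show "of_int (coeff s i) * \<omega> ^ i = of_int (coeff s i) * \<omega> ^ (i mod N)" by simp
  qed
  also have "\<dots> = (\<Sum>k<N. \<Sum>i\<in>{x\<in>{..degree s}. x mod N = k}. of_int (coeff s i) * \<omega> ^ (i mod N))"
    by (rule sum.group[symmetric]) (use assms(1) in auto)
  also have "\<dots> = (\<Sum>k<N. of_int (fc N s k) * \<omega> ^ k)"
    unfolding fc_def of_int_sum sum_distrib_right
    by (intro sum.cong refl) auto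
  finally show ?thesis .
qed

lemma dvd_aux: fixes k k' N :: nat assumes a: "k < N" "k' < N" shows "N dvd k' + (N - k) \<longleftrightarrow> k' = k"
proof
  assume "N dvd k' + (N - k)"
  then obtain c where c: "k' + (N - k) = N * c" by (auto elim: dvdE)
  have "N * c < N * 2" using a c by linarith
  then have "c < 2" using mult_less_cancel1[of N c 2] by simp
  moreover have "c \<noteq> 0"
  proof
    assume "c = 0" then have "k' + (N - k) = 0" using c by simp
    then show False using a by simp
  qed
  ultimately have "c = 1" by simp
  then show "k' = k" using a c by simp
qed (use a in simp)

lemma pow_aux: "((z::complex) ^ j) ^ a * z ^ (j * b) = (z ^ (a + b)) ^ j"
proof -
  have 1: "(z ^ (a + b)) ^ j = z ^ ((a + b) * j)" by (simp only: power_mult)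
  have e: "(a + b) * j = j * a + j * b" by (simp add: algebra_simps)
  have 2: "z ^ ((a + b) * j) = z ^ (j * a) * z ^ (j * b)" unfolding e by (simp only: power_add)
  have 3: "z ^ (j * a) * z ^ (j * b) = (z ^ j) ^ a * z ^ (j * b)" by (simp only: power_mult)
  show ?thesis by (simp only: 1 2 3)
qed

lemma FI2: assumes "N \<ge> 1" "k < N"
  shows "of_nat N * of_int (fc N s k) = (\<Sum>j<N. poly (mp s) (zeta N ^ j) * zeta N ^ (j * (N - k)))"
proof -
  have "(\<Sum>j<N. poly (mp s) (zeta N ^ j) * zeta N ^ (j * (N - k)))
     = (\<Sum>j<N. \<Sum>k'<N. of_int (fc N s k') * (zeta N ^ (k' + (N - k))) ^ j)"
  proof (intro sum.cong refl)
    fix j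
    have r: "(zeta N ^ j) ^ N = 1"
      by (rule root_pow[OF zeta_N[OF assms(1)]])
    show "poly (mp s) (zeta N ^ j) * zeta N ^ (j * (N - k)) =
          (\<Sum>k'<N. of_int (fc N s k') * (zeta N ^ (k' + (N - k))) ^ j)"
      unfolding FI1[OF assms(1) r] sum_distrib_right
      by (intro sum.cong refl) (simp only: pow_aux mult.assoc)
  qed
  also have "\<dots> = (\<Sum>k'<N. of_int (fc N s k') * (\<Sum>j<N. (zeta N ^ (k' + (N - k))) ^ j))"
    by (subst sum.swap) (simp only: sum_distrib_left)
  also have "\<dots> = (\<Sum>k'<N. of_int (fc N s k') * (if k' = k then of_nat N else 0))"
  proof (intro sum.cong refl)
    fix k' assume "k' \<in> {..<N}"
    then have "N dvd k' + (N - k) \<longleftrightarrow> k' = k" using dvd_aux[OF assms(2), of k'] by auto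
    then show "of_int (fc N s k') * (\<Sum>j<N. (zeta N ^ (k' + (N - k))) ^ j) = of_int (fc N s k') * (if k' = k then of_nat N else 0)"
      unfolding geo_sum[OF assms(1)] by simp
  qed
  also have "\<dots> = (\<Sum>k'<N. if k' = k then of_int (fc N s k) * of_nat N else 0)"
    by (intro sum.cong refl) auto
  also have "\<dots> = of_nat N * of_int (fc N s k)" using assms by (simp add: mult.commute)
  finally show ?thesis by (rule sym)
qed

lemma min_poly_div:
  assumes f0: "f \<noteq> 0" and min: "\<forall>g. g \<noteq> 0 \<and> poly (mp g) z = 0 \<longrightarrow> degree f \<le> degree g"
    and fz: "poly (mp f) z = 0" and hz: "poly (mp h) z = 0"
  shows "\<exists>a q. a \<noteq> 0 \<and> smult a h = f * q"
proof -
  define r where "r = pseudo_mod h f"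
  obtain a q where aq: "a \<noteq> 0" "smult a h = f * q + r" using pseudo_mod(1)[OF f0, of h] r_def by blast
  have deg: "r = 0 \<or> degree r < degree f" using pseudo_mod(2)[OF f0, of h] r_def by simp
  have "mp (smult a h) = mp f * mp q + mp r" using aq by (simp add: mp_mult mp_add)
  then have "poly (mp (smult a h)) z = poly (mp f) z * poly (mp q) z + poly (mp r) z" by simp
  then have "poly (mp r) z = 0" using fz hz by (simp add: mp_smult)
  then have "r = 0" using deg min by (meson not_le)
  then show ?thesis using aq by auto
qed

lemma zeta_nz: "zeta N \<noteq> 0" by (simp add: zeta_def)

lemma kron:
  assumes N: "N \<ge> 1" and y: "y = poly (mp p) (zeta N)" and ny: "norm y = 1"
  shows "\<exists>n>0. y ^ n = 1"
proof -
  let ?z = "zeta N"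
  define X where "X = (monom 1 N - 1 :: int poly)"
  have mpX: "mp X = monom 1 N - 1" by (simp add: X_def mp_diff mp_monom)
  have polyX: "poly (mp X) w = w ^ N - 1" for w by (simp add: mpX poly_monom)
  have X0: "X \<noteq> 0"
  proof
    assume "X = 0"
    then have "coeff X N = 0" by simp
    then show False using N by (simp add: X_def coeff_monom)
  qed
  have Xz: "poly (mp X) ?z = 0" using zeta_N[OF N] by (simp add: polyX)
  have "\<exists>f. (f \<noteq> 0 \<and> poly (mp f) ?z = 0) \<and> (\<forall>g. g \<noteq> 0 \<and> poly (mp g) ?z = 0 \<longrightarrow> degree f \<le> degree g)"
    by (rule ex_has_least_nat[of _ X]) (use X0 Xz in simp)
  then obtain f where f: "f \<noteq> 0 \<and> poly (mp f) ?z = 0"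
    and fmin': "\<forall>g. g \<noteq> 0 \<and> poly (mp g) ?z = 0 \<longrightarrow> degree f \<le> degree g" by blast
  have fnz: "f \<noteq> 0" and fz: "poly (mp f) ?z = 0" using f by auto
  have div: "poly (mp h) w = 0" if hz: "poly (mp h) ?z = 0" and fw: "poly (mp f) w = 0" for h w
  proof -
    obtain a q where aq: "a \<noteq> 0" "smult a h = f * q"
      using min_poly_div[OF fnz fmin' fz hz] by blast
    then have "mp (smult a h) = mp f * mp q" by (simp add: mp_mult)
    then have "poly (mp (smult a h)) w = poly (mp f * mp q) w" by simp
    then have "of_int a * poly (mp h) w = poly (mp f) w * poly (mp q) w"
      by (simp add: mp_smult)
    then show ?thesis using aq(1) fw by simp
  qed
  obtain a1 G where a1: "a1 \<noteq> 0" "smult a1 X = f * G"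
    using min_poly_div[OF fnz fmin' fz Xz] by blast
  define pc where "pc = pcompose p (monom 1 (N - 1))"
  have pc: "poly (mp pc) w = cnj (poly (mp p) w)" if "w ^ N = 1" for w
  proof -
    have "poly (mp pc) w = poly (mp p) (w ^ (N - 1))"
      by (simp add: pc_def mp_pcompose mp_monom poly_pcompose poly_monom)
    also have "w ^ (N - 1) = cnj w" using cnj_root[OF N that] by simp
    finally show ?thesis by (simp add: mp_cnj)
  qed
  define h2 where "h2 = p * pc - 1"
  have polyh2: "poly (mp h2) w = poly (mp p) w * cnj (poly (mp p) w) - 1" if "w ^ N = 1" for w
    using pc[OF that] by (simp add: h2_def mp_diff mp_mult)
  have h2z: "poly (mp h2) ?z = 0"
  proof -
    have "y * cnj y = 1" using complex_norm_square[of y] ny by simp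
    then show ?thesis using polyh2[OF zeta_N[OF N]] y by simp
  qed
  have unit: "norm (poly (mp p) w) = 1" if "w ^ N = 1" "poly (mp f) w = 0" for w
  proof -
    have "poly (mp p) w * cnj (poly (mp p) w) = 1"
      using div[OF h2z that(2)] polyh2[OF that(1)] by simp
    then have "complex_of_real (norm (poly (mp p) w) ^ 2) = 1"
      using complex_norm_square[of "poly (mp p) w"] by simp
    then have "norm (poly (mp p) w) ^ 2 = 1" using of_real_eq_1_iff by blast
    then have "norm (poly (mp p) w) = 1 \<or> norm (poly (mp p) w) = -1" by (simp add: power2_eq_1_iff)
    then show ?thesis using norm_ge_zero[of "poly (mp p) w"] by linarith
  qed
  have Gvan: "poly (mp G) w = 0" if "w ^ N = 1" "poly (mp f) w \<noteq> 0" for w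
  proof -
    have "mp (smult a1 X) = mp f * mp G" using a1 by (simp add: mp_mult)
    then have "poly (mp (smult a1 X)) w = poly (mp f * mp G) w" by simp
    then have "of_int a1 * poly (mp X) w = poly (mp f) w * poly (mp G) w"
      by (simp add: mp_smult)
    then show ?thesis using that by (simp add: polyX)
  qed
  have Gz: "poly (mp G) ?z \<noteq> 0"
  proof
    assume G0: "poly (mp G) ?z = 0"
    have e: "smult (of_int a1) (monom 1 N - 1) = mp f * mp G"
      using arg_cong[OF a1(2), of mp] by (simp add: mp_smult mpX mp_mult)
    have "pderiv (smult (of_int a1) (monom 1 N - 1)) = pderiv (mp f * mp G)" using e by simp
    then have "smult (of_int a1) (monom (of_nat N) (N - 1)) = mp f * pderiv (mp G) + mp G * pderiv (mp f)"
      by (simp add: pderiv_smult pderiv_diff pderiv_monom pderiv_mult)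
    then have "poly (smult (of_int a1) (monom (of_nat N) (N - 1))) ?z = poly (mp f * pderiv (mp G) + mp G * pderiv (mp f)) ?z"
      by simp
    then have "of_int a1 * (of_nat N * ?z ^ (N - 1)) = poly (mp f) ?z * poly (pderiv (mp G)) ?z + poly (mp G) ?z * poly (pderiv (mp f)) ?z"
      by (simp add: poly_monom)
    then have "of_int a1 * (of_nat N * ?z ^ (N - 1)) = 0" using f G0 by simp
    then show False using a1(1) N zeta_nz by simp
  qed
  define B where "B = (\<Sum>j<N. norm (poly (mp G) (?z ^ j)))"
  define s where "s m = G * p ^ m" for m
  have polys: "poly (mp (s m)) w = poly (mp G) w * poly (mp p) w ^ m" for m w
    by (simp add: s_def mp_mult mp_power)
  have bnd: "norm (poly (mp (s m)) (?z ^ j)) \<le> B" if "j < N" for m j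
  proof -
    have r: "(?z ^ j) ^ N = 1" by (rule root_pow[OF zeta_N[OF N]])
    have le: "norm (poly (mp G) (?z ^ j)) \<le> B" unfolding B_def
      by (rule member_le_sum) (use that in auto)
    show ?thesis
    proof (cases "poly (mp f) (?z ^ j) = 0")
      case True
      then show ?thesis using unit[OF r True] le by (simp add: polys norm_mult norm_power)
    next
      case False
      have "0 \<le> B" unfolding B_def by (simp add: sum_nonneg)
      then show ?thesis using Gvan[OF r False] by (simp add: polys)
    qed
  qed
  have cb: "\<bar>of_int (fc N (s m) k)\<bar> \<le> B" if "k < N" for m k
  proof -
    have "of_nat N * norm (of_int (fc N (s m) k) :: complex)
        = norm (\<Sum>j<N. poly (mp (s m)) (?z ^ j) * ?z ^ (j * (N - k)))"
      using arg_cong[OF FI2[OF N that, of "s m"], of norm] by (simp add: norm_mult)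
    also have "\<dots> \<le> (\<Sum>j<N. norm (poly (mp (s m)) (?z ^ j) * ?z ^ (j * (N - k))))"
      by (rule norm_sum)
    also have "\<dots> \<le> (\<Sum>j<N. B)"
    proof (rule sum_mono)
      fix j assume "j \<in> {..<N}"
      have "norm (?z ^ (j * (N - k))) = 1"
        by (intro norm_root[OF N] root_pow[OF zeta_N[OF N]])
      then show "norm (poly (mp (s m)) (?z ^ j) * ?z ^ (j * (N - k))) \<le> B"
        using bnd[of j m] \<open>j \<in> {..<N}\<close> by (simp add: norm_mult)
    qed
    also have "\<dots> = of_nat N * B" by simp
    finally have "of_nat N * norm (of_int (fc N (s m) k) :: complex) \<le> of_nat N * B" .
    then have "norm (of_int (fc N (s m) k) :: complex) \<le> B" using N by simp
    then show ?thesis by simp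
  qed
  define C where "C = \<lceil>B\<rceil>"
  define F where "F = (\<lambda>c. \<Sum>k<N. of_int (c k) * ?z ^ k) ` (PiE {..<N} (\<lambda>_. {-C..C}))"
  have finF: "finite F" unfolding F_def by (intro finite_imageI finite_PiE) auto
  have inF: "poly (mp G) ?z * y ^ m \<in> F" for m
  proof -
    have "poly (mp G) ?z * y ^ m = poly (mp (s m)) ?z" using polys y by simp
    also have "\<dots> = (\<Sum>k<N. of_int (fc N (s m) k) * ?z ^ k)" by (rule FI1[OF N zeta_N[OF N]])
    also have "\<dots> = (\<Sum>k<N. of_int (restrict (fc N (s m)) {..<N} k) * ?z ^ k)" by simp
    finally have eq: "poly (mp G) ?z * y ^ m = (\<Sum>k<N. of_int (restrict (fc N (s m)) {..<N} k) * ?z ^ k)" .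
    have "restrict (fc N (s m)) {..<N} \<in> PiE {..<N} (\<lambda>_. {-C..C})"
    proof
      fix k assume k: "k \<in> {..<N}"
      have "\<bar>real_of_int (fc N (s m) k)\<bar> \<le> B" using cb[of k m] k by simp
      then have "\<bar>fc N (s m) k\<bar> \<le> C" unfolding C_def by linarith
      then show "restrict (fc N (s m)) {..<N} k \<in> {-C..C}" using k by auto
    qed auto
    then show ?thesis unfolding F_def eq by blast
  qed
  have "range (\<lambda>m. y ^ m) \<subseteq> (\<lambda>x. x / poly (mp G) ?z) ` F"
  proof
    fix x assume "x \<in> range (\<lambda>m. y ^ m)"
    then obtain m where "x = y ^ m" by auto
    then show "x \<in> (\<lambda>x. x / poly (mp G) ?z) ` F"
      using inF[of m] Gz by (intro image_eqI[of _ _ "poly (mp G) ?z * y ^ m"]) auto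
  qed
  then have "finite (range (\<lambda>m::nat. y ^ m))" by (rule finite_subset) (rule finite_imageI[OF finF])
  then have "\<not> inj (\<lambda>m::nat. y ^ m)" using finite_imageD infinite_UNIV_nat by blast
  then obtain a b :: nat where ab: "a \<noteq> b" "y ^ a = y ^ b" unfolding inj_def by blast
  have y0: "y \<noteq> 0" using ny by auto
  show ?thesis
  proof (cases "a < b")
    case True
    have "y ^ a * y ^ (b - a) = y ^ (a + (b - a))" by (simp only: power_add)
    also have "a + (b - a) = b" using True by simp
    finally have "y ^ a * y ^ (b - a) = y ^ a * 1" using ab by simp
    then have "y ^ (b - a) = 1" using y0 by simp
    then show ?thesis using True by (intro exI[of _ "b - a"]) simp
  next
    case False
    then have "b < a" using ab by simp
    have "y ^ b * y ^ (a - b) = y ^ (b + (a - b))" by (simp only: power_add)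
    also have "b + (a - b) = a" using \<open>b < a\<close> by simp
    finally have "y ^ b * y ^ (a - b) = y ^ b * 1" using ab by simp
    then have "y ^ (a - b) = 1" using y0 by simp
    then show ?thesis using \<open>b < a\<close> by (intro exI[of _ "a - b"]) simp
  qed
qed

definition tr3 :: "complex^3^3 \<Rightarrow> complex" where "tr3 A = (\<Sum>i\<in>UNIV. A$i$i)"

definition m2 :: "complex^3^3 \<Rightarrow> complex" where
  "m2 A = A$1$1*A$2$2 - A$1$2*A$2$1 + A$1$1*A$3$3 - A$1$3*A$3$1 + A$2$2*A$3$3 - A$2$3*A$3$2"

lemma neq3: "(1::3) \<noteq> 2" "(1::3) \<noteq> 3" "(2::3) \<noteq> 3" "(2::3) \<noteq> 1" "(3::3) \<noteq> 1" "(3::3) \<noteq> 2"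
  by simp_all

lemma charpoly: "det (mat z - A) = z^3 - tr3 A * z^2 + m2 A * z - det (A::complex^3^3)"
  unfolding det_3 tr3_def m2_def sum_3
  by (simp add: mat_def neq3 power2_eq_square power3_eq_cube algebra_simps)

definition cyc :: "nat \<Rightarrow> complex \<Rightarrow> bool" where
  "cyc N y \<longleftrightarrow> (\<exists>p. y = poly (mp p) (zeta N))"

lemma cyc_add: "cyc N x \<Longrightarrow> cyc N y \<Longrightarrow> cyc N (x + y)"
  unfolding cyc_def by (metis mp_add poly_add)
lemma cyc_diff: "cyc N x \<Longrightarrow> cyc N y \<Longrightarrow> cyc N (x - y)"
  unfolding cyc_def by (metis mp_diff poly_diff)
lemma cyc_mult: "cyc N x \<Longrightarrow> cyc N y \<Longrightarrow> cyc N (x * y)"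
  unfolding cyc_def by (metis mp_mult poly_mult)
lemma cyc_int: "cyc N (of_int a)"
  unfolding cyc_def by (intro exI[of _ "[:a:]"]) (simp add: mp_const)
lemma cyc_zpow: "cyc N (zeta N ^ j)"
  unfolding cyc_def by (intro exI[of _ "monom 1 j"]) (simp add: mp_monom poly_monom)
lemma cyc_cnj: assumes "N \<ge> 1" "cyc N x" shows "cyc N (cnj x)"
proof -
  obtain p where p: "x = poly (mp p) (zeta N)" using assms(2) cyc_def by blast
  have "poly (mp (pcompose p (monom 1 (N - 1)))) (zeta N) = poly (mp p) (zeta N ^ (N - 1))"
    by (simp add: mp_pcompose mp_monom poly_pcompose poly_monom)
  also have "zeta N ^ (N - 1) = cnj (zeta N)" using cnj_root[OF assms(1) zeta_N[OF assms(1)]] by simp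
  finally show ?thesis unfolding cyc_def p by (metis mp_cnj)
qed

primrec mpow :: "complex^3^3 \<Rightarrow> nat \<Rightarrow> complex^3^3" where
  "mpow A 0 = mat 1" | "mpow A (Suc n) = A ** mpow A n"

lemma mat_mult_vec: "mat z *v v = z *s (v::complex^3)"
  by (simp add: vec_eq_iff matrix_vector_mult_def mat_def sum_3 neq3 forall_3)

lemma mvec_smult: "A *v (c *s x) = c *s (A *v (x::complex^3))"
  by (simp add: vec_eq_iff matrix_vector_mult_def sum_3 algebra_simps)

lemma eig_pow: assumes "A *v v = z *s v" shows "mpow A n *v v = z ^ n *s v"
proof (induction n)
  case 0 then show ?case by simp
next
  case (Suc n)
  have "mpow A (Suc n) *v v = A *v (mpow A n *v v)" by (simp add: matrix_vector_mul_assoc)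
  also have "\<dots> = z ^ n *s (z *s v)" using Suc assms by (simp add: mvec_smult)
  also have "\<dots> = z ^ Suc n *s v" by (simp add: vector_smult_assoc mult.commute)
  finally show ?case .
qed

lemma eigval_root: assumes N: "N \<ge> 1" and A: "mpow A N = mat 1" and d: "det (mat z - A) = 0"
  shows "z ^ N = 1"
proof -
  have "\<not> invertible (mat z - A)" using d invertible_det_nz by blast
  then obtain x where x: "(mat z - A) *v x = 0" "x \<noteq> 0"
    using matrix_left_invertible_ker[of "mat z - A"] invertible_left_inverse by blast
  have "A *v x = z *s x" using x(1) by (simp add: matrix_vector_mult_diff_rdistrib mat_mult_vec)
  then have "mpow A N *v x = z ^ N *s x" by (rule eig_pow)
  then have e: "x = z ^ N *s x" using A by simp
  obtain i where i: "x $ i \<noteq> 0" using x(2) by (metis vec_eq_iff zero_index)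
  have "x $ i = z ^ N * x $ i" using arg_cong[OF e, of "\<lambda>v. v $ i"] by simp
  then show ?thesis using i by simp
qed

lemma tr_cyc: assumes N: "N \<ge> 1" and A: "mpow A N = mat 1" shows "cyc N (tr3 A)"
proof -
  define P where "P = [:-det A, m2 A, -tr3 A, 1:]"
  have polyP: "poly P z = det (mat z - A)" for z
    by (simp add: P_def charpoly power2_eq_square power3_eq_cube algebra_simps)
  have degP: "degree P = 3" by (simp add: P_def)
  have c3: "coeff P 3 = 1" by (simp add: P_def eval_nat_numeral)
  obtain r where r: "smult (lead_coeff P) (\<Prod>i<degree P. [:-r i, 1:]) = P"
    using complex_poly_decompose' by blast
  have P3: "P = (\<Prod>i<3. [:-r i, 1:])" using r unfolding degP c3 by simp
  have "(\<Prod>i<3. [:-r i, 1:]) = [:-r 0, 1:] * [:-r 1, 1:] * [:-r 2, 1:]"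
    by (simp add: eval_nat_numeral prod.lessThan_Suc)
  then have Pr: "P = [:-r 0, 1:] * [:-r 1, 1:] * [:-r 2, 1:]" using P3 by simp
  have "coeff P 2 = - (r 0 + r 1 + r 2)"
    unfolding Pr by (simp add: numeral_2_eq_2 algebra_simps)
  moreover have "coeff P 2 = - tr3 A" by (simp add: P_def eval_nat_numeral)
  ultimately have tr: "tr3 A = r 0 + r 1 + r 2" by (simp add: algebra_simps)
  have root: "cyc N (r i)" if "poly P (r i) = 0" for i
  proof -
    have "r i ^ N = 1" using eigval_root[OF N A] that polyP by simp
    then obtain j where "r i = zeta N ^ j" using zeta_root[OF N] by blast
    then show ?thesis by (simp add: cyc_zpow)
  qed
  have "poly P (r 0) = 0" unfolding Pr poly_mult by simp
  moreover have "poly P (r 1) = 0" unfolding Pr poly_mult by simp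
  moreover have "poly P (r 2) = 0" unfolding Pr poly_mult by simp
  ultimately have "cyc N (r 0)" "cyc N (r 1)" "cyc N (r 2)" using root by blast+
  then show ?thesis unfolding tr by (intro cyc_add)
qed

lemma SmL: "(Smat k ** M) $ i $ j = (if i = k then M $ i $ j else - M $ i $ j)"
  by (simp add: matrix_matrix_mult_def Smat_def if_distrib[of "\<lambda>x. x * _"] cong: if_cong)

lemma SmR: "(M ** Smat l) $ i $ j = (if j = l then M $ i $ j else - M $ i $ j)"
  by (simp add: matrix_matrix_mult_def Smat_def if_distrib[of "\<lambda>x. _ * x"] cong: if_cong)

lemma trmul: "tr3 (A ** B) = (\<Sum>i\<in>UNIV. \<Sum>j\<in>UNIV. A$i$j * B$j$i)"
  by (simp add: tr3_def matrix_matrix_mult_def)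

lemma diag_id: "2 * T$k$k = tr3 T + tr3 (Smat k ** T)"
  using exhaust_3[of k] by (auto simp: tr3_def SmL sum_3)

lemma off_id: "4 * (T$k$l * T$l$k) = tr3 (T ** T) + tr3 (Smat k ** T ** T) + tr3 (T ** Smat l ** T) + tr3 (Smat k ** T ** Smat l ** T)"
  unfolding trmul using exhaust_3[of k] exhaust_3[of l]
  by (auto simp: SmL SmR sum_3 algebra_simps)

lemma mpow_add: "mpow A (m + n) = mpow A m ** mpow A n"
  by (induction m) (simp_all add: matrix_mul_assoc)

lemma mpow_mult_one: "mpow A n = mat 1 \<Longrightarrow> mpow A (n * c) = mat 1"
  by (induction c) (simp_all add: mpow_add)

lemma mpow_in: assumes "finite_matrix_group G" "A \<in> G" shows "mpow A n \<in> G"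
  using assms by (induction n) (auto simp: finite_matrix_group_def)

lemma order_ex: assumes fg: "finite_matrix_group G" and A: "A \<in> G" shows "\<exists>n>0. mpow A n = mat 1"
proof -
  have "range (mpow A) \<subseteq> G" using mpow_in[OF fg A] by auto
  moreover have "finite G" using fg by (simp add: finite_matrix_group_def)
  ultimately have "finite (range (mpow A))" by (rule finite_subset)
  then have "\<not> inj (mpow A)" using finite_imageD infinite_UNIV_nat by blast
  then obtain a b where ab: "a \<noteq> b" "mpow A a = mpow A b" unfolding inj_def by blast
  have key: "mpow A d = mat 1" if h: "mpow A a' = mpow A (a' + d)" for a' d
  proof -
    have "mpow A a' \<in> G" by (rule mpow_in[OF fg A])
    then have "invertible (mpow A a')" using fg unfolding finite_matrix_group_def by simp
    then obtain M' where M': "M' ** mpow A a' = mat 1" unfolding invertible_def by blast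
    have "mat 1 = M' ** mpow A (a' + d)" using h M' by simp
    also have "\<dots> = (M' ** mpow A a') ** mpow A d" by (simp add: mpow_add matrix_mul_assoc)
    also have "\<dots> = mpow A d" using M' by simp
    finally show ?thesis by simp
  qed
  show ?thesis
  proof (cases "a < b")
    case True
    have e: "a + (b - a) = b" using True by simp
    have "mpow A a = mpow A (a + (b - a))" unfolding e by (rule ab(2))
    then have "mpow A (b - a) = mat 1" by (rule key)
    moreover have "b - a > 0" using True by simp
    ultimately show ?thesis by blast
  next
    case False
    then have ba: "b < a" using ab(1) by simp
    have e: "b + (a - b) = a" using ba by simp
    have "mpow A b = mpow A (b + (a - b))" unfolding e by (rule ab(2)[symmetric])
    then have "mpow A (a - b) = mat 1" by (rule key)
    moreover have "a - b > 0" using ba by simp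
    ultimately show ?thesis by blast
  qed
qed

lemma common_exp: assumes fg: "finite_matrix_group G"
  shows "\<exists>N\<ge>1. \<forall>A\<in>G. mpow A N = mat 1"
proof -
  define ord where "ord A = (SOME n. n > 0 \<and> mpow A n = mat 1)" for A
  have ord: "ord A > 0 \<and> mpow A (ord A) = mat 1" if "A \<in> G" for A
    unfolding ord_def by (rule someI_ex) (rule order_ex[OF fg that])
  define N where "N = (\<Prod>A\<in>G. ord A)"
  have fin: "finite G" using fg by (simp add: finite_matrix_group_def)
  have "N > 0" unfolding N_def using ord by (intro prod_pos) auto
  moreover have "mpow A N = mat 1" if "A \<in> G" for A
  proof -
    have "ord A dvd N" unfolding N_def using fin that by (rule dvd_prodI)
    then obtain c where "N = ord A * c" by (auto elim: dvdE)
    then show ?thesis using mpow_mult_one ord[OF that] by simp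
  qed
  ultimately show ?thesis by (intro exI[of _ N]) auto
qed

lemma g1: "4 * ((sqrt 5 + 1)/4)^2 - 2 = (sqrt 5 - 1)/(2::real)"
  by (simp add: power2_eq_square field_simps)
lemma g2: "2 * ((sqrt 5 + 1)/4) * ((sqrt 5 - 1)/2) = (1::real)"
  by (simp add: field_simps)
lemma g3: "2 - 4*((sqrt 5 - 1)/4)^2 = (sqrt 5 + 1)/(2::real)"
  by (simp add: power2_eq_square field_simps)
lemma g4: "2 * ((sqrt 5 - 1)/4) * ((sqrt 5 + 1)/2) = (1::real)"
  by (simp add: field_simps)
lemma g5: "(sqrt 5 - 1)/2 > (0::real)"
  by (simp add: real_less_rsqrt)

theorem theorem3:
  fixes G :: "(complex^3^3) set" and T :: "complex^3^3" and c :: real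
  assumes "finite_matrix_group G"
    and "\<forall>A\<in>G. unitary3 A"
    and "Smat 1 \<in> G" and "Smat 2 \<in> G" and "Smat 3 \<in> G"
    and "T \<in> G"
    and "c \<in> {1/2, (sqrt 5 + 1) / 4, (sqrt 5 - 1) / 4}"
  shows "(\<forall>j::3. cmod (T $ j $ j) = c \<longrightarrow>
            (\<exists>\<xi>. root_of_unity \<xi> \<and> T $ j $ j = complex_of_real c * \<xi>))
       \<and> (\<forall>k l::3. k \<noteq> l \<longrightarrow> cmod (T $ k $ l * T $ l $ k) = 1/4 \<longrightarrow>
            (\<exists>\<xi>. root_of_unity \<xi> \<and> T $ k $ l * T $ l $ k = \<xi> / 4))"
proof -
  obtain N where N: "N \<ge> 1" and NG: "\<forall>A\<in>G. mpow A N = mat 1" using common_exp[OF assms(1)] by blast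
  have mulG: "A ** B \<in> G" if "A \<in> G" "B \<in> G" for A B
    using assms(1) that unfolding finite_matrix_group_def by blast
  have trG: "cyc N (tr3 A)" if "A \<in> G" for A using tr_cyc[OF N] NG that by blast
  have SG: "Smat k \<in> G" for k using exhaust_3[of k] assms(3-5) by auto
  have kron': "root_of_unity y" if "cyc N y" "norm y = 1" for y
    using kron[OF N _ that(2)] that(1) unfolding cyc_def root_of_unity_def by blast
  have T: "T \<in> G" by fact
  have c2: "cyc N 2" using cyc_int[of N 2] by simp
  have P1: "\<exists>\<xi>. root_of_unity \<xi> \<and> T $ j $ j = complex_of_real c * \<xi>" if h: "cmod (T $ j $ j) = c" for j
  proof -
    define x where "x = 2 * T $ j $ j"
    have xc: "cyc N x" unfolding x_def diag_id
      by (intro cyc_add trG mulG SG T)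
    have nx: "norm x = 2 * c" using h by (simp add: x_def norm_mult)
    have xx: "x * cnj x = of_real (4 * c ^ 2)"
      using complex_norm_square[of x] nx by (simp add: power_mult_distrib)
    have xxc: "cyc N (x * cnj x)" by (intro cyc_mult xc cyc_cnj[OF N])
    have "\<exists>r. 2 * c * r = 1 \<and> r > 0 \<and> cyc N (of_real r)"
    proof -
      consider "c = 1/2" | "c = (sqrt 5 + 1) / 4" | "c = (sqrt 5 - 1) / 4" using assms(7) by blast
      then show ?thesis
      proof cases
        case 1
        then show ?thesis using cyc_int[of N 1] by (intro exI[of _ 1]) simp
      next
        case 2
        have r: "4 * c ^ 2 - 2 = (sqrt 5 - 1) / 2" unfolding 2 by (rule g1)
        have "of_real (4 * c ^ 2 - 2) = x * cnj x - 2" using xx by simp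
        then have "cyc N (of_real (4 * c ^ 2 - 2))" using cyc_diff[OF xxc c2] by simp
        moreover have "2 * c * (4 * c ^ 2 - 2) = 1" unfolding r unfolding 2 by (rule g2)
        moreover have "4 * c ^ 2 - 2 > 0" unfolding r by (rule g5)
        ultimately show ?thesis by blast
      next
        case 3
        have r: "2 - 4 * c ^ 2 = (sqrt 5 + 1) / 2" unfolding 3 by (rule g3)
        have "of_real (2 - 4 * c ^ 2) = 2 - x * cnj x" using xx by simp
        then have "cyc N (of_real (2 - 4 * c ^ 2))" using cyc_diff[OF c2 xxc] by simp
        moreover have "2 * c * (2 - 4 * c ^ 2) = 1" unfolding r unfolding 3 by (rule g4)
        moreover have "2 - 4 * c ^ 2 > 0" unfolding r by (simp add: add_pos_pos)
        ultimately show ?thesis by blast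
      qed
    qed
    then obtain r where r: "2 * c * r = 1" "r > 0" "cyc N (of_real r)" by blast
    define y where "y = x * of_real r"
    have "cyc N y" unfolding y_def by (intro cyc_mult xc r(3))
    moreover have "norm y = 1" unfolding y_def using nx r by (simp add: norm_mult)
    ultimately have "root_of_unity y" by (rule kron')
    moreover have "T $ j $ j = complex_of_real c * y"
    proof -
      have "complex_of_real c * y = complex_of_real (2 * c * r) * T $ j $ j"
        unfolding y_def x_def by (simp add: algebra_simps)
      then show ?thesis using r(1) by simp
    qed
    ultimately show ?thesis by blast
  qed
  have P2: "\<exists>\<xi>. root_of_unity \<xi> \<and> T $ k $ l * T $ l $ k = \<xi> / 4"
    if h: "cmod (T $ k $ l * T $ l $ k) = 1/4" for k l
  proof -
    define w where "w = 4 * (T $ k $ l * T $ l $ k)"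
    have "cyc N w" unfolding w_def off_id
      by (intro cyc_add trG mulG SG T)
    moreover have "norm w = 1" using h by (simp add: w_def norm_mult)
    ultimately have "root_of_unity w" by (rule kron')
    moreover have "T $ k $ l * T $ l $ k = w / 4" by (simp add: w_def)
    ultimately show ?thesis by blast
  qed
  show ?thesis using P1 P2 by blast
qed

end
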